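(* Let $W\subseteq C^\omega$ be a prefix-independent objective, $\kappa$ a cardinal, and $U$ a $C$-graph which is almost $(\kappa,W)$-universal. Then the $C$-graph $U\ltimes\kappa$ is $(\kappa,W)$-universal for prefix-independent objectives.
   Context: A $C$-pregraph: vertex set $V(G)$, edges $E(G)\subseteq V(G)\times C\times V(G)$ written $v\xrightarrow{c}v'$; a $C$-graph if every vertex has an outgoing edge. A $C$-pretree is a $C$-pregraph with root $t_0$ such that every vertex has a unique path from $t_0$; for a vertex $t$, $T[t]$ is the restriction of $T$ to vertices reachable from $t$. A morphism maps vertices so that $v\xrightarrow{c}v'$ implies $\phi(v)\xrightarrow{c}\phi(v')$. A (pre)graph satisfies $W$ if every infinite path from every vertex has colour sequence in $W$. $W$ is prefix-independent if $uw\in W\iff w\in W$ for all $u\in C^*,w\in C^\omega$. $U$ is almost $(\kappa,W)$-universal if $U$ satisfies $W$ and every $C$-pretree $T$ of cardinality $<\kappa$ satisfying $W$ has a vertex $t$ such that $T[t]$ admits a morphism into $U$. $U$ is $(\kappa,W)$-universal for prefix-independent objectives if $U$ satisfies $W$ and every $C$-pretree of cardinality $<\kappa$ satisfying $W$ admits a morphism into $U$. For an ordinal $\alpha$, $U\ltimes\alpha$ is the graph with vertex set $V(U)\times\alpha$ and edges $(v,\lambda)\xrightarrow{c}(v',\lambda')$ whenever $\lambda>\lambda'$, or $\lambda=\lambda'$ and $v\xrightarrow{c}v'\in E(U)$. *)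

theory Defs
  imports Main
begin

type_synonym ('v, 'c) pregraph = "'v set \<times> ('v \<times> 'c \<times> 'v) set"

definition verts :: "('v, 'c) pregraph \<Rightarrow> 'v set" where
  "verts G = fst G"

definition edges :: "('v, 'c) pregraph \<Rightarrow> ('v \<times> 'c \<times> 'v) set" where
  "edges G = snd G"

definition is_pregraph :: "('v, 'c) pregraph \<Rightarrow> bool" where
  "is_pregraph G \<longleftrightarrow> edges G \<subseteq> verts G \<times> UNIV \<times> verts G"

definition is_cgraph :: "('v, 'c) pregraph \<Rightarrow> bool" where
  "is_cgraph G \<longleftrightarrow> is_pregraph G \<and> (\<forall>v\<in>verts G. \<exists>c v'. (v, c, v') \<in> edges G)"

fun fpath :: "('v \<times> 'c \<times> 'v) set \<Rightarrow> 'v \<Rightarrow> ('v \<times> 'c \<times> 'v) list \<Rightarrow> 'v \<Rightarrow> bool" where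
  "fpath E a [] b \<longleftrightarrow> a = b"
| "fpath E a (e # es) b \<longleftrightarrow> fst e = a \<and> e \<in> E \<and> fpath E (snd (snd e)) es b"

definition is_pretree :: "('v, 'c) pregraph \<Rightarrow> 'v \<Rightarrow> bool" where
  "is_pretree T t0 \<longleftrightarrow> is_pregraph T \<and> t0 \<in> verts T \<and>
     (\<forall>t\<in>verts T. \<exists>!es. fpath (edges T) t0 es t)"

definition subtree :: "('v, 'c) pregraph \<Rightarrow> 'v \<Rightarrow> ('v, 'c) pregraph" where
  "subtree T t =
     (let V' = {v \<in> verts T. \<exists>es. fpath (edges T) t es v}
      in (V', edges T \<inter> (V' \<times> UNIV \<times> V')))"

definition is_morphism :: "('v, 'c) pregraph \<Rightarrow> ('w, 'c) pregraph \<Rightarrow> ('v \<Rightarrow> 'w) \<Rightarrow> bool" where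
  "is_morphism G H \<phi> \<longleftrightarrow> (\<forall>v\<in>verts G. \<phi> v \<in> verts H) \<and>
     (\<forall>v c v'. (v, c, v') \<in> edges G \<longrightarrow> (\<phi> v, c, \<phi> v') \<in> edges H)"

definition satisfies :: "('v, 'c) pregraph \<Rightarrow> (nat \<Rightarrow> 'c) set \<Rightarrow> bool" where
  "satisfies G W \<longleftrightarrow> (\<forall>(vs :: nat \<Rightarrow> 'v) (cs :: nat \<Rightarrow> 'c).
     vs 0 \<in> verts G \<and> (\<forall>i. (vs i, cs i, vs (Suc i)) \<in> edges G) \<longrightarrow> cs \<in> W)"

definition conc :: "'c list \<Rightarrow> (nat \<Rightarrow> 'c) \<Rightarrow> (nat \<Rightarrow> 'c)" where
  "conc u w = (\<lambda>i. if i < length u then u ! i else w (i - length u))"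

definition prefix_independent :: "(nat \<Rightarrow> 'c) set \<Rightarrow> bool" where
  "prefix_independent W \<longleftrightarrow> (\<forall>u w. conc u w \<in> W \<longleftrightarrow> w \<in> W)"

text \<open>Cardinal kappa is given as a cardinal well-order r (Card_order r); the
  ordinal kappa is the set Field r, ordered strictly by r - Id.
  Trees have vertex type 't, which is fixed at the theorem level.\<close>
definition almost_universal ::
  "'k rel \<Rightarrow> (nat \<Rightarrow> 'c) set \<Rightarrow> ('v, 'c) pregraph \<Rightarrow> 't itself \<Rightarrow> bool" where
  "almost_universal r W U (_ :: 't itself) \<longleftrightarrow> satisfies U W \<and>
     (\<forall>(T :: ('t, 'c) pregraph) t0. is_pretree T t0 \<and> (card_of (verts T), r) \<in> ordLess \<and> satisfies T W \<longrightarrow>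
        (\<exists>t\<in>verts T. \<exists>\<phi> :: 't \<Rightarrow> 'v. is_morphism (subtree T t) U \<phi>))"

definition universal_pi ::
  "'k rel \<Rightarrow> (nat \<Rightarrow> 'c) set \<Rightarrow> ('v, 'c) pregraph \<Rightarrow> 't itself \<Rightarrow> bool" where
  "universal_pi r W U (_ :: 't itself) \<longleftrightarrow> satisfies U W \<and>
     (\<forall>(T :: ('t, 'c) pregraph) t0. is_pretree T t0 \<and> (card_of (verts T), r) \<in> ordLess \<and> satisfies T W \<longrightarrow>
        (\<exists>\<phi> :: 't \<Rightarrow> 'v. is_morphism T U \<phi>))"

definition lex_prod :: "('v, 'c) pregraph \<Rightarrow> 'k rel \<Rightarrow> ('v \<times> 'k, 'c) pregraph" where
  "lex_prod U r =
     (verts U \<times> Field r,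
      {((v, l), c, (v', l')) | v l c v' l'.
         v \<in> verts U \<and> v' \<in> verts U \<and> l \<in> Field r \<and> l' \<in> Field r \<and>
         (((l', l) \<in> r \<and> l' \<noteq> l) \<or> (l = l' \<and> (v, c, v') \<in> edges U))})"

end

theory Submission imports Defs begin

lemma fpath_append:
  "fpath E a (xs @ ys) b \<longleftrightarrow> (\<exists>m. fpath E a xs m \<and> fpath E m ys b)"
  by (induction xs arbitrary: a) auto

lemma fpath_mono: "fpath E a es b \<Longrightarrow> E \<subseteq> E' \<Longrightarrow> fpath E' a es b"
  by (induction es arbitrary: a) auto

definition closedset :: "'t set \<Rightarrow> ('t \<times> 'c \<times> 't) set \<Rightarrow> 't set \<Rightarrow> bool" where
  "closedset V E X \<longleftrightarrow> X \<subseteq> V \<and> (\<forall>v c w. v \<in> X \<longrightarrow> (v, c, w) \<in> E \<longrightarrow> w \<in> X)"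

lemma fpath_closed: "fpath E a es b \<Longrightarrow> closedset V E X \<Longrightarrow> a \<in> X \<Longrightarrow> b \<in> X"
  by (induction es arbitrary: a) (auto simp: closedset_def)

definition restr :: "('t, 'c) pregraph \<Rightarrow> 't set \<Rightarrow> ('t, 'c) pregraph" where
  "restr T A = (A, edges T \<inter> (A \<times> UNIV \<times> A))"

lemma restr_simps[simp]: "verts (restr T A) = A" "edges (restr T A) = edges T \<inter> (A \<times> UNIV \<times> A)"
  by (auto simp: restr_def verts_def edges_def)

lemma fpath_restr:
  assumes "fpath E a es b" "E \<subseteq> V \<times> UNIV \<times> V" "b \<in> V - X" "closedset V E X" "a \<in> V"
  shows "fpath (E \<inter> ((V - X) \<times> UNIV \<times> (V - X))) a es b"
  using assms
proof (induction es arbitrary: a)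
  case Nil
  then show ?case by simp
next
  case (Cons e es)
  obtain a' c a'' where e: "e = (a', c, a'')" by (cases e) auto
  have ea: "a' = a" "(a, c, a'') \<in> E" "fpath E a'' es b" using Cons.prems e by auto
  have "a'' \<in> V" using ea(2) Cons.prems(2) by auto
  have "a'' \<notin> X" using fpath_closed[OF ea(3) Cons.prems(4)] Cons.prems(3) by auto
  have "a \<notin> X" using \<open>a'' \<notin> X\<close> ea(2) Cons.prems(4) unfolding closedset_def by blast
  have "fpath (E \<inter> ((V - X) \<times> UNIV \<times> (V - X))) a'' es b"
    using Cons.IH[OF ea(3) Cons.prems(2,3,4) \<open>a'' \<in> V\<close>] .
  then show ?case using e ea \<open>a'' \<in> V\<close> \<open>a'' \<notin> X\<close> \<open>a \<notin> X\<close> Cons.prems(5) by auto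
qed

lemma restr_pretree:
  assumes "is_pretree T t0" "closedset (verts T) (edges T) X" "verts T - X \<noteq> {}"
  shows "is_pretree (restr T (verts T - X)) t0"
proof -
  have pg: "edges T \<subseteq> verts T \<times> UNIV \<times> verts T" using assms(1) by (simp add: is_pretree_def is_pregraph_def)
  have t0: "t0 \<in> verts T" using assms(1) by (simp add: is_pretree_def)
  have t0X: "t0 \<notin> X"
  proof
    assume "t0 \<in> X"
    obtain b where b: "b \<in> verts T - X" using assms(3) by auto
    then obtain es where "fpath (edges T) t0 es b" using assms(1) unfolding is_pretree_def by blast
    then have "b \<in> X" using fpath_closed assms(2) \<open>t0 \<in> X\<close> by metis
    then show False using b by auto
  qed
  show ?thesis
    unfolding is_pretree_def is_pregraph_def
  proof (intro conjI ballI)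
    show "edges (restr T (verts T - X)) \<subseteq> verts (restr T (verts T - X)) \<times> UNIV \<times> verts (restr T (verts T - X))"
      by auto
    show "t0 \<in> verts (restr T (verts T - X))" using t0 t0X by simp
  next
    fix t assume t: "t \<in> verts (restr T (verts T - X))"
    have "\<exists>!es. fpath (edges T) t0 es t" using assms(1) t unfolding is_pretree_def by auto
    then obtain es where es: "fpath (edges T) t0 es t" and un: "\<And>es'. fpath (edges T) t0 es' t \<Longrightarrow> es' = es"
      by (auto simp: Ex1_def)
    have "fpath (edges (restr T (verts T - X))) t0 es t"
      using fpath_restr[OF es pg _ assms(2) t0] t by simp
    moreover have "\<And>es'. fpath (edges (restr T (verts T - X))) t0 es' t \<Longrightarrow> es' = es"
      using un fpath_mono by (metis Int_lower1 restr_simps(2))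
    ultimately show "\<exists>!es. fpath (edges (restr T (verts T - X))) t0 es t" by blast
  qed
qed

lemma restr_sat: "satisfies T W \<Longrightarrow> A \<subseteq> verts T \<Longrightarrow> satisfies (restr T A) W"
  unfolding satisfies_def by auto

lemma subtree_verts: "verts (subtree T t) = {v \<in> verts T. \<exists>es. fpath (edges T) t es v}"
  by (simp add: subtree_def Let_def verts_def)

lemma subtree_edges: "edges (subtree T t) = edges T \<inter> (verts (subtree T t) \<times> UNIV \<times> verts (subtree T t))"
  by (simp add: subtree_def Let_def verts_def edges_def)

lemma step_closed:
  assumes pg: "edges T \<subseteq> verts T \<times> UNIV \<times> verts T" and cl: "closedset (verts T) (edges T) X"
    and t: "t \<in> verts T - X"
  defines "B \<equiv> verts (subtree (restr T (verts T - X)) t)"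
  shows "closedset (verts T) (edges T) (X \<union> B)" "B \<subseteq> verts T - X" "t \<in> B"
proof -
  show "B \<subseteq> verts T - X" unfolding B_def subtree_verts by auto
  show "t \<in> B" unfolding B_def subtree_verts using t by (auto intro: exI[of _ "[]"])
  show "closedset (verts T) (edges T) (X \<union> B)"
    unfolding closedset_def
  proof (intro conjI allI impI)
    show "X \<union> B \<subseteq> verts T" using cl unfolding B_def subtree_verts closedset_def by auto
  next
    fix v c w assume v: "v \<in> X \<union> B" and e: "(v, c, w) \<in> edges T"
    show "w \<in> X \<union> B"
    proof (cases "v \<in> X")
      case True then show ?thesis using cl e unfolding closedset_def by blast
    next
      case False
      then have vB: "v \<in> B" using v by auto
      show ?thesis
      proof (cases "w \<in> X")
        case False
        have wV: "w \<in> verts T" using e pg by auto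
        obtain es where es: "fpath (edges T \<inter> ((verts T - X) \<times> UNIV \<times> (verts T - X))) t es v" "v \<in> verts T - X"
          using vB unfolding B_def subtree_verts by auto
        have "fpath (edges T \<inter> ((verts T - X) \<times> UNIV \<times> (verts T - X))) t (es @ [(v, c, w)]) w"
          using es e wV False by (auto simp: fpath_append)
        then show ?thesis using wV False unfolding B_def subtree_verts by auto
      qed simp
    qed
  qed
qed


lemma lex_edge: "((a, c, b) \<in> edges (lex_prod U r)) \<longleftrightarrow> fst a \<in> verts U \<and> fst b \<in> verts U \<and> snd a \<in> Field r \<and> snd b \<in> Field r \<and>
   (((snd b, snd a) \<in> r \<and> snd b \<noteq> snd a) \<or> (snd a = snd b \<and> (fst a, c, fst b) \<in> edges U))"
  by (cases a; cases b) (auto simp: lex_prod_def edges_def)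

lemma lex_verts: "verts (lex_prod U r) = verts U \<times> Field r"
  by (simp add: lex_prod_def verts_def)

lemma lex_sat:
  assumes pi: "prefix_independent W" and co: "Card_order r" and sU: "satisfies U W"
  shows "satisfies (lex_prod U r) W"
  unfolding satisfies_def
proof (intro allI impI)
  fix vs cs
  assume a: "vs 0 \<in> verts (lex_prod U r) \<and> (\<forall>i. (vs i, cs i, vs (Suc i)) \<in> edges (lex_prod U r))"
  have wo: "Well_order r" using co card_order_on_well_order_on by blast
  have refl: "refl_on (Field r) r" and tr: "trans r" and wf: "wf (r - Id)" and anti: "antisym r"
    using wo by (auto simp: well_order_on_def linear_order_on_def partial_order_on_def preorder_on_def)
  define l where "l i = snd (vs i)" for i
  have st: "(l (Suc i), l i) \<in> r" for i
    using a[THEN conjunct2, rule_format, of i] refl unfolding l_def lex_edge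
    by (auto simp: refl_on_def)
  have mono: "(l j, l i) \<in> r" if "i \<le> j" for i j
    using that
  proof (induction j rule: dec_induct)
    case base
    then show ?case using st[of i] refl by (auto simp: refl_on_def Field_def)
  next
    case (step j)
    then show ?case using st[of j] tr by (meson transD)
  qed
  obtain m where m: "m \<in> range l" "\<And>y. (y, m) \<in> r - Id \<Longrightarrow> y \<notin> range l"
    using wfE_min[OF wf, of "l 0" "range l"] by blast
  then obtain N where N: "l N = m" by auto
  have const: "l i = l N" if "N \<le> i" for i
    using mono[OF that] m(2)[of "l i"] N by auto
  have eU: "(fst (vs i), cs i, fst (vs (Suc i))) \<in> edges U" if "N \<le> i" for i
    using a[THEN conjunct2, rule_format, of i] const[OF that] const[of "Suc i"] that
    unfolding l_def lex_edge by auto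
  have v0: "fst (vs N) \<in> verts U"
    using a[THEN conjunct2, rule_format, of N] unfolding lex_edge by auto
  have "(\<lambda>j. cs (N + j)) \<in> W"
    using sU unfolding satisfies_def
    apply (elim allE[of _ "\<lambda>j. fst (vs (N + j))"] allE[of _ "\<lambda>j. cs (N + j)"])
    using v0 eU by auto
  moreover have "conc (map cs [0..<N]) (\<lambda>j. cs (N + j)) = cs"
    by (auto simp: conc_def)
  ultimately show "cs \<in> W" using pi unfolding prefix_independent_def by metis
qed


theorem lemma3p8:
  fixes W :: "(nat \<Rightarrow> 'c) set" and r :: "'k rel" and U :: "('v, 'c) pregraph"
  assumes "prefix_independent W"
    and "Card_order r"
    and "is_cgraph U"
    and "almost_universal r W U TYPE('t)"
  shows "universal_pi r W (lex_prod U r) TYPE('t)"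
proof -
  have wo: "Well_order r" using assms(2) card_order_on_well_order_on by blast
  have wf: "wf (r - Id)" and tot: "total_on (Field r) r"
    using wo by (auto simp: well_order_on_def linear_order_on_def)
  have sU: "satisfies U W" using assms(4) unfolding almost_universal_def by blast
  show ?thesis unfolding universal_pi_def
  proof (intro conjI allI impI)
    show "satisfies (lex_prod U r) W" using lex_sat assms(1,2) sU by blast
  next
    fix T :: "('t, 'c) pregraph" and t0
    assume H: "is_pretree T t0 \<and> (card_of (verts T), r) \<in> ordLess \<and> satisfies T W"
    define V where "V = verts T"
    define E where "E = edges T"
    have pg: "E \<subseteq> V \<times> UNIV \<times> V" using H unfolding is_pretree_def is_pregraph_def V_def E_def by blast
    define P where "P X p \<longleftrightarrow> fst p \<in> V - X \<and> is_morphism (subtree (restr T (V - X)) (fst p)) U (snd p)"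
      for X and p :: "'t \<times> ('t \<Rightarrow> 'v)"
    define ch where "ch X = (SOME p. P X p)" for X
    have chP: "P X (ch X)" if cl: "closedset V E X" and ne: "V - X \<noteq> {}" for X
    proof -
      have pt: "is_pretree (restr T (V - X)) t0"
        using restr_pretree[of T t0 X] H cl ne unfolding V_def E_def by blast
      have "(card_of (V - X), card_of V) \<in> ordLeq" by (rule card_of_mono1) auto
      then have cd: "(card_of (verts (restr T (V - X))), r) \<in> ordLess"
        using H ordLeq_ordLess_trans unfolding V_def by auto
      have sat: "satisfies (restr T (V - X)) W" using restr_sat H unfolding V_def by blast
      obtain t \<phi> where "t \<in> verts (restr T (V - X))" "is_morphism (subtree (restr T (V - X)) t) U \<phi>"
        using assms(4) pt cd sat unfolding almost_universal_def by blast
      then have "P X (t, \<phi>)" unfolding P_def by simp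
      then show ?thesis unfolding ch_def by (rule someI)
    qed
    define blk where "blk X = (if V - X = {} then {} else verts (subtree (restr T (V - X)) (fst (ch X))))" for X
    have blk: "closedset V E (X \<union> blk X) \<and> blk X \<subseteq> V - X \<and> (V - X \<noteq> {} \<longrightarrow> fst (ch X) \<in> blk X)"
      if cl: "closedset V E X" for X
    proof (cases "V - X = {}")
      case True
      then show ?thesis using cl by (simp add: blk_def)
    next
      case False
      have "fst (ch X) \<in> V - X" using chP[OF cl False] unfolding P_def by blast
      then show ?thesis using step_closed[of T X "fst (ch X)"] pg cl False unfolding blk_def V_def E_def
        by simp
    qed
    define R where "R = r - Id"
    define S where "S = wfrec R (\<lambda>g l. \<Union>\<mu>\<in>{\<mu>. (\<mu>, l) \<in> R}. g \<mu> \<union> blk (g \<mu>))"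
    have Seq: "S l = (\<Union>\<mu>\<in>{\<mu>. (\<mu>, l) \<in> R}. S \<mu> \<union> blk (S \<mu>))" for l
    proof -
      have "S l = (\<lambda>g l. \<Union>\<mu>\<in>{\<mu>. (\<mu>, l) \<in> R}. g \<mu> \<union> blk (g \<mu>)) (cut S R l) l"
        unfolding S_def by (rule wfrec) (simp add: R_def wf)
      then show ?thesis by (auto simp: cut_apply)
    qed
    have Scl: "closedset V E (S l)" for l
    proof (induction l rule: wf_induct[of R])
      case 1
      then show ?case using wf R_def by simp
    next
      case (2 l)
      have "closedset V E (S \<mu> \<union> blk (S \<mu>))" if "(\<mu>, l) \<in> R" for \<mu>
        using blk 2 that by blast
      then show ?case unfolding Seq[of l] closedset_def by blast
    qed
    have Smono: "S \<mu> \<union> blk (S \<mu>) \<subseteq> S l" if "(\<mu>, l) \<in> R" for \<mu> l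
      using that Seq[of l] by blast
    have disj: "blk (S l) \<inter> S l = {}" for l using blk[OF Scl[of l]] by blast
    have tot': "(l, l') \<in> R \<or> (l', l) \<in> R" if "l \<in> Field r" "l' \<in> Field r" "l \<noteq> l'" for l l'
      using tot that unfolding total_on_def R_def by blast
    have "\<exists>l\<in>Field r. V - S l = {}"
    proof (rule ccontr)
      assume "\<not> ?thesis"
      then have ne: "V - S l \<noteq> {}" if "l \<in> Field r" for l using that by blast
      define f where "f l = fst (ch (S l))" for l
      have fin: "f l \<in> blk (S l)" if "l \<in> Field r" for l
        using blk[OF Scl[of l]] ne[OF that] unfolding f_def by blast
      have "inj_on f (Field r)"
      proof (rule inj_onI, rule ccontr)
        fix l l' assume l: "l \<in> Field r" "l' \<in> Field r" "f l = f l'" "l \<noteq> l'"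
        have "f l \<noteq> f l'" if "(a, b) \<in> R" "a \<in> Field r" "b \<in> Field r" "l = a \<and> l' = b \<or> l = b \<and> l' = a" for a b
        proof -
          have "f a \<in> S b" using fin[OF that(2)] Smono[OF that(1)] by blast
          moreover have "f b \<notin> S b" using fin[OF that(3)] disj[of b] by blast
          ultimately show ?thesis using that(4) by auto
        qed
        then show False using tot'[OF l(1,2,4)] l by blast
      qed
      moreover have "f ` Field r \<subseteq> V" using fin blk[OF Scl] by blast
      ultimately have "(card_of (Field r), card_of V) \<in> ordLeq" using card_of_ordLeq by blast
      moreover have "(card_of V, card_of (Field r)) \<in> ordLess"
        using H ordLess_ordIso_trans ordIso_symmetric[OF card_of_Field_ordIso[OF assms(2)]]
        unfolding V_def by blast
      ultimately show False using ordLess_ordLeq_trans ordLess_irreflexive by blast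
    qed
    then obtain l0 where l0: "l0 \<in> Field r" "V \<subseteq> S l0" by blast
    have cover: "\<exists>l\<in>Field r. v \<in> blk (S l)" if v: "v \<in> V" for v
    proof -
      have wfR: "wf R" using wf R_def by simp
      obtain l1 where l1: "l1 \<in> {l. v \<in> S l}" "\<And>y. (y, l1) \<in> R \<Longrightarrow> y \<notin> {l. v \<in> S l}"
        using wfE_min[OF wfR, of l0 "{l. v \<in> S l}"] l0 v by blast
      then obtain \<mu> where mu: "(\<mu>, l1) \<in> R" "v \<in> S \<mu> \<union> blk (S \<mu>)" using Seq[of l1] by blast
      then have "v \<in> blk (S \<mu>)" using l1(2) by blast
      moreover have "\<mu> \<in> Field r" using mu(1) unfolding R_def Field_def by blast
      ultimately show ?thesis by blast
    qed
    define lev where "lev v = (SOME l. l \<in> Field r \<and> v \<in> blk (S l))" for v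
    have lev: "lev v \<in> Field r \<and> v \<in> blk (S (lev v))" if "v \<in> V" for v
      using someI_ex[OF cover[OF that, unfolded Bex_def]] unfolding lev_def .
    have order: "l' = l \<or> (l', l) \<in> R"
      if "v \<in> blk (S l)" "w \<in> blk (S l')" "(v, c, w) \<in> E" "l \<in> Field r" "l' \<in> Field r" for v w c l l'
    proof (rule ccontr)
      assume "\<not> ?thesis"
      then have "(l, l') \<in> R" using tot' that(4,5) by blast
      then have "v \<in> S l'" using Smono that(1) by blast
      then have "w \<in> S l'" using Scl[of l'] that(3) unfolding closedset_def by blast
      then show False using disj[of l'] that(2) by blast
    qed
    define \<phi> where "\<phi> v = (snd (ch (S (lev v))) v, lev v)" for v
    have ne: "V - S (lev v) \<noteq> {}" if "v \<in> V" for v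
      using lev[OF that] blk[OF Scl] by blast
    have blkeq: "blk (S (lev v)) = verts (subtree (restr T (V - S (lev v))) (fst (ch (S (lev v)))))"
      if "v \<in> V" for v using ne[OF that] unfolding blk_def by simp
    have mor: "is_morphism (subtree (restr T (V - S (lev v))) (fst (ch (S (lev v))))) U (snd (ch (S (lev v))))"
      if "v \<in> V" for v using chP[OF Scl ne[OF that]] unfolding P_def by blast
    have vU: "snd (ch (S (lev v))) v \<in> verts U" if "v \<in> V" for v
      using mor[OF that] lev[OF that] blkeq[OF that] unfolding is_morphism_def by auto
    have "is_morphism T (lex_prod U r) \<phi>"
      unfolding is_morphism_def
    proof (intro conjI ballI allI impI)
      fix v assume "v \<in> verts T"
      then show "\<phi> v \<in> verts (lex_prod U r)"
        using vU lev unfolding lex_verts \<phi>_def V_def by auto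
    next
      fix v c w assume e: "(v, c, w) \<in> edges T"
      then have vw: "v \<in> V" "w \<in> V" using pg unfolding E_def by auto
      have o: "lev w = lev v \<or> (lev w, lev v) \<in> R"
        using order[of v "lev v" w "lev w" c] lev vw e unfolding E_def by blast
      show "(\<phi> v, c, \<phi> w) \<in> edges (lex_prod U r)"
      proof (cases "lev w = lev v")
        case False
        then show ?thesis using o vU vw lev unfolding lex_edge \<phi>_def R_def by auto
      next
        case True
        have "(v, c, w) \<in> edges (subtree (restr T (V - S (lev v))) (fst (ch (S (lev v)))))"
          unfolding subtree_edges using e lev[OF vw(1)] lev[OF vw(2)] True blkeq[OF vw(1)]
            blk[OF Scl[of "lev v"]] unfolding E_def by auto
        then have "(snd (ch (S (lev v))) v, c, snd (ch (S (lev v))) w) \<in> edges U"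
          using mor[OF vw(1)] unfolding is_morphism_def by blast
        moreover have "snd (ch (S (lev v))) w \<in> verts U" using vU[OF vw(2)] True by simp
        ultimately show ?thesis using True vU vw lev unfolding lex_edge \<phi>_def by auto
      qed
    qed
    then show "\<exists>\<phi> :: 't \<Rightarrow> 'v \<times> 'k. is_morphism T (lex_prod U r) \<phi>" by blast
  qed
qed

end
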